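(* Let $d,k\ge 1$ be integers, let $\|\cdot\|$ be a norm on $\mathbb{R}^d$, let $\epsilon\ge 0$, and let $(X,Y)$ be a pair of random variables with values in $\mathbb{R}^d\times\mathbb{R}^k$. Let $\ell:\mathbb{R}^k\times\mathbb{R}^k\to\mathbb{R}_{\ge0}$ be a loss function and let $A,B:\mathbb{R}^k\times\mathbb{R}^k\to\mathbb{R}_{\ge 0}$ be functions with $A(u,u)=B(u,u)=0$ for all $u\in\mathbb{R}^k$ such that for all $u,v,u',v'\in\mathbb{R}^k$, $$\ell(u,v)+\ell(u',v')+A(u,u')\ge B(v,v')\quad\text{and}\quad \ell(u,v)+\ell(u',v')+A(v,v')\ge B(u,u').$$ Let $\mathcal{F}$ be a class of functions from $\mathbb{R}^d$ to $\mathbb{R}^k$. Then for every $f\in\mathcal{F}$, $$R(f)+R_\epsilon(f)\ge \max\left\{\mathbb{E}\left(\sup_{\Delta:\|\Delta\|\le\epsilon} B\big(f(X),f(X+\Delta)\big)\right),\ \mathbb{E}\,B(Y,Y')\right\},$$ where $Y'$ is a random variable such that, conditioned on $X$, $Y'$ is independent of $Y$ and has the same conditional distribution as $Y$ given $X$.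
   Context: The standard risk of $f$ is $R(f)=\mathbb{E}\,\ell(f(X),Y)$ and its adversarial risk is $R_\epsilon(f)=\mathbb{E}\left(\sup_{\Delta\in\mathbb{R}^d:\|\Delta\|\le\epsilon}\ell(f(X+\Delta),Y)\right)$. All expectations are assumed to be well defined (possibly $+\infty$). *)

theory Defs
  imports "HOL-Probability.Probability"
begin

definition is_norm :: "('a::real_vector \<Rightarrow> real) \<Rightarrow> bool" where
  "is_norm N \<longleftrightarrow> (\<forall>x. N x \<ge> 0) \<and> (\<forall>x. N x = 0 \<longleftrightarrow> x = 0)
     \<and> (\<forall>c x. N (c *\<^sub>R x) = \<bar>c\<bar> * N x) \<and> (\<forall>x y. N (x + y) \<le> N x + N y)"

definition std_risk :: "'w measure \<Rightarrow> ('b \<Rightarrow> 'b \<Rightarrow> real) \<Rightarrow> ('a \<Rightarrow> 'b)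
    \<Rightarrow> ('w \<Rightarrow> 'a) \<Rightarrow> ('w \<Rightarrow> 'b) \<Rightarrow> ennreal" where
  "std_risk M l f X Y = (\<integral>\<^sup>+ \<omega>. ennreal (l (f (X \<omega>)) (Y \<omega>)) \<partial>M)"

definition adv_risk :: "'w measure \<Rightarrow> ('a::real_vector \<Rightarrow> real) \<Rightarrow> real
    \<Rightarrow> ('b \<Rightarrow> 'b \<Rightarrow> real) \<Rightarrow> ('a \<Rightarrow> 'b) \<Rightarrow> ('w \<Rightarrow> 'a) \<Rightarrow> ('w \<Rightarrow> 'b) \<Rightarrow> ennreal" where
  "adv_risk M N eps l f X Y =
     (\<integral>\<^sup>+ \<omega>. (SUP \<Delta>\<in>{\<Delta>. N \<Delta> \<le> eps}. ennreal (l (f (X \<omega> + \<Delta>)) (Y \<omega>))) \<partial>M)"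

text \<open>Y' is, conditionally on X, independent of Y and has the same conditional
  distribution as Y given X (conditioning on the sigma-algebra generated by X).\<close>
definition cond_iid_copy :: "'w measure \<Rightarrow> ('w \<Rightarrow> 'a::topological_space)
    \<Rightarrow> ('w \<Rightarrow> 'b::topological_space) \<Rightarrow> ('w \<Rightarrow> 'b) \<Rightarrow> bool" where
  "cond_iid_copy M X Y Y' \<longleftrightarrow>
     (let G = vimage_algebra (space M) X borel in
      (\<forall>S\<in>sets borel. \<forall>T\<in>sets borel.
         AE \<omega> in M. real_cond_exp M G (\<lambda>\<omega>. indicator S (Y \<omega>) * indicator T (Y' \<omega>)) \<omega>
           = real_cond_exp M G (\<lambda>\<omega>. indicator S (Y \<omega>)) \<omega>
             * real_cond_exp M G (\<lambda>\<omega>. indicator T (Y' \<omega>)) \<omega>)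
      \<and> (\<forall>S\<in>sets borel.
         AE \<omega> in M. real_cond_exp M G (\<lambda>\<omega>. indicator S (Y \<omega>)) \<omega>
           = real_cond_exp M G (\<lambda>\<omega>. indicator S (Y' \<omega>)) \<omega>))"

end

theory Submission
  imports Defs
begin

lemma cyl_meas:
  fixes X :: "'w \<Rightarrow> 'a::euclidean_space" and Z :: "'w \<Rightarrow> 'b::euclidean_space"
  assumes P: "prob_space M" and [measurable]: "X \<in> borel_measurable M" "Z \<in> borel_measurable M"
    and C: "C \<in> sets borel" and S: "S \<in> sets borel"
  shows "emeasure (distr M borel (\<lambda>\<omega>. (X \<omega>, Z \<omega>))) (C \<times> S)
     = ennreal (\<integral>\<omega>\<in>(X -` C \<inter> space M). indicator S (Z \<omega>) \<partial>M)"
proof -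
  interpret prob_space M by fact
  have m: "(\<lambda>\<omega>. (X \<omega>, Z \<omega>)) \<in> measurable M borel"
  proof -
    have "(\<lambda>\<omega>. (X \<omega>, Z \<omega>)) \<in> measurable M (borel \<Otimes>\<^sub>M borel)" by measurable
    then show ?thesis by (simp add: borel_prod)
  qed
  have CS: "C \<times> S \<in> sets (borel :: ('a \<times> 'b) measure)"
    unfolding borel_prod[symmetric] using C S by auto
  have "emeasure (distr M borel (\<lambda>\<omega>. (X \<omega>, Z \<omega>))) (C \<times> S)
      = emeasure M ((\<lambda>\<omega>. (X \<omega>, Z \<omega>)) -` (C \<times> S) \<inter> space M)"
    by (rule emeasure_distr[OF m CS])
  also have "\<dots> = ennreal (measure M ((\<lambda>\<omega>. (X \<omega>, Z \<omega>)) -` (C \<times> S) \<inter> space M))"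
    by (simp add: emeasure_eq_measure)
  also have "measure M ((\<lambda>\<omega>. (X \<omega>, Z \<omega>)) -` (C \<times> S) \<inter> space M)
      = (\<integral>\<omega>. indicator ((\<lambda>\<omega>. (X \<omega>, Z \<omega>)) -` (C \<times> S) \<inter> space M) \<omega> \<partial>M)"
    by simp
  also have "\<dots> = (\<integral>\<omega>\<in>(X -` C \<inter> space M). indicator S (Z \<omega>) \<partial>M)"
    unfolding set_lebesgue_integral_def
    by (rule Bochner_Integration.integral_cong) (auto simp: indicator_def)
  finally show ?thesis .
qed

lemma distr_eq:
  fixes X :: "'w \<Rightarrow> 'a::euclidean_space" and Y Y' :: "'w \<Rightarrow> 'b::euclidean_space"
  assumes P: "prob_space M" and [measurable]: "X \<in> borel_measurable M" "Y \<in> borel_measurable M"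
    "Y' \<in> borel_measurable M"
    and G: "G = vimage_algebra (space M) X borel"
    and eq: "\<forall>S\<in>sets borel. AE \<omega> in M. real_cond_exp M G (\<lambda>\<omega>. indicator S (Y \<omega>)) \<omega>
           = real_cond_exp M G (\<lambda>\<omega>. indicator S (Y' \<omega>)) \<omega>"
  shows "distr M borel (\<lambda>\<omega>. (X \<omega>, Y \<omega>)) = distr M borel (\<lambda>\<omega>. (X \<omega>, Y' \<omega>))"
proof -
  interpret prob_space M by fact
  have sub: "subalgebra M G"
    unfolding subalgebra_def G
  proof
    show "space (vimage_algebra (space M) X borel) = space M" by simp
    have "sets (vimage_algebra (space M) X borel) = {X -` A \<inter> space M | A. A \<in> sets borel}"
      by (rule sets_vimage_algebra2) simp
    then show "sets (vimage_algebra (space M) X borel) \<subseteq> sets M" by auto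
  qed
  interpret finite_measure_subalgebra M G
    by unfold_locales (rule sub)
  let ?E = "{a \<times> b | a b. a \<in> sets (borel::'a measure) \<and> b \<in> sets (borel::'b measure)}"
  have setsB: "sets (borel :: ('a \<times> 'b) measure) = sigma_sets (UNIV \<times> UNIV) ?E"
    by (subst borel_prod[symmetric]) (simp add: sets_pair_measure)
  show ?thesis
  proof (rule measure_eqI_generator_eq[where E="?E" and \<Omega>="UNIV \<times> UNIV" and A="\<lambda>_. UNIV"])
    show "Int_stable ?E" by (rule Int_stable_pair_measure_generator)
    show "?E \<subseteq> Pow (UNIV \<times> UNIV)" by auto
    show "sets (distr M borel (\<lambda>\<omega>. (X \<omega>, Y \<omega>))) = sigma_sets (UNIV \<times> UNIV) ?E"
      using setsB by simp
    show "sets (distr M borel (\<lambda>\<omega>. (X \<omega>, Y' \<omega>))) = sigma_sets (UNIV \<times> UNIV) ?E"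
      using setsB by simp
    show "range (\<lambda>_. UNIV) \<subseteq> ?E"
      by (auto intro!: exI[of _ UNIV])
    show "(\<Union>i. UNIV) = UNIV \<times> UNIV" by auto
    show "emeasure (distr M borel (\<lambda>\<omega>. (X \<omega>, Y \<omega>))) UNIV \<noteq> \<infinity>" for i :: nat
    proof -
      have "(\<lambda>\<omega>. (X \<omega>, Y \<omega>)) \<in> measurable M (borel \<Otimes>\<^sub>M borel)" by measurable
      then have m: "(\<lambda>\<omega>. (X \<omega>, Y \<omega>)) \<in> measurable M borel" by (simp add: borel_prod)
      then interpret D: prob_space "distr M borel (\<lambda>\<omega>. (X \<omega>, Y \<omega>))"
        by (rule prob_space_distr)
      show ?thesis using D.emeasure_space_1 by simp
    qed
    fix Z assume "Z \<in> ?E"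
    then obtain C S where Z: "Z = C \<times> S" and C: "C \<in> sets borel" and S: "S \<in> sets borel" by auto
    let ?A = "X -` C \<inter> space M"
    have AG: "?A \<in> sets G" unfolding G by (rule in_vimage_algebra[OF C])
    have iY: "integrable M (\<lambda>\<omega>. indicator S (Y \<omega>) :: real)"
      using S by (intro integrable_const_bound[where B=1]) auto
    have iY': "integrable M (\<lambda>\<omega>. indicator S (Y' \<omega>) :: real)"
      using S by (intro integrable_const_bound[where B=1]) auto
    have "(\<integral>\<omega>\<in>?A. indicator S (Y \<omega>) \<partial>M) = (\<integral>\<omega>\<in>?A. real_cond_exp M G (\<lambda>\<omega>. indicator S (Y \<omega>)) \<omega> \<partial>M)"
      by (rule real_cond_exp_intA[OF iY AG])
    also have "\<dots> = (\<integral>\<omega>\<in>?A. real_cond_exp M G (\<lambda>\<omega>. indicator S (Y' \<omega>)) \<omega> \<partial>M)"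
      using eq S C by (intro set_lebesgue_integral_cong_AE) auto
    also have "\<dots> = (\<integral>\<omega>\<in>?A. indicator S (Y' \<omega>) \<partial>M)"
      by (rule real_cond_exp_intA[OF iY' AG, symmetric])
    finally show "emeasure (distr M borel (\<lambda>\<omega>. (X \<omega>, Y \<omega>))) Z = emeasure (distr M borel (\<lambda>\<omega>. (X \<omega>, Y' \<omega>))) Z"
      unfolding Z using cyl_meas[OF P _ _ C S, of X Y] cyl_meas[OF P _ _ C S, of X Y'] by simp
  qed
qed

theorem theorem1:
  fixes M :: "'w measure"
    and N :: "'a::euclidean_space \<Rightarrow> real"
    and eps :: real
    and X :: "'w \<Rightarrow> 'a"
    and Y Y' :: "'w \<Rightarrow> 'b::euclidean_space"
    and l A B :: "'b \<Rightarrow> 'b \<Rightarrow> real"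
    and F :: "('a \<Rightarrow> 'b) set"
    and f :: "'a \<Rightarrow> 'b"
  assumes "prob_space M"
    and "is_norm N"
    and "eps \<ge> 0"
    and "X \<in> borel_measurable M" and "Y \<in> borel_measurable M" and "Y' \<in> borel_measurable M"
    and "cond_iid_copy M X Y Y'"
    and "\<forall>u v. l u v \<ge> 0" and "\<forall>u v. A u v \<ge> 0" and "\<forall>u v. B u v \<ge> 0"
    and "\<forall>u. A u u = 0" and "\<forall>u. B u u = 0"
    and "\<forall>u v u' v'. l u v + l u' v' + A u u' \<ge> B v v'"
    and "\<forall>u v u' v'. l u v + l u' v' + A v v' \<ge> B u u'"
    and "case_prod l \<in> borel_measurable borel"
    and "case_prod B \<in> borel_measurable borel"
    and "f \<in> F"
    and "f \<in> borel_measurable borel"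
    and "(\<lambda>\<omega>. SUP \<Delta>\<in>{\<Delta>. N \<Delta> \<le> eps}. ennreal (l (f (X \<omega> + \<Delta>)) (Y \<omega>))) \<in> borel_measurable M"
    and "(\<lambda>\<omega>. SUP \<Delta>\<in>{\<Delta>. N \<Delta> \<le> eps}. ennreal (B (f (X \<omega>)) (f (X \<omega> + \<Delta>)))) \<in> borel_measurable M"
  shows "std_risk M l f X Y + adv_risk M N eps l f X Y \<ge>
           max (\<integral>\<^sup>+ \<omega>. (SUP \<Delta>\<in>{\<Delta>. N \<Delta> \<le> eps}. ennreal (B (f (X \<omega>)) (f (X \<omega> + \<Delta>)))) \<partial>M)
               (\<integral>\<^sup>+ \<omega>. ennreal (B (Y \<omega>) (Y' \<omega>)) \<partial>M)"
proof -
  note [measurable] = assms(4,5,6)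
  interpret prob_space M by fact
  let ?D = "{\<Delta>. N \<Delta> \<le> eps}"
  have N0: "N 0 = 0" using assms(2) unfolding is_norm_def by blast
  have D0: "0 \<in> ?D" using N0 assms(3) by simp
  have lm[measurable]: "(\<lambda>p. l (fst p) (snd p)) \<in> borel_measurable borel"
    using assms(15) by (simp add: case_prod_beta')
  have Bm[measurable]: "(\<lambda>p. B (fst p) (snd p)) \<in> borel_measurable borel"
    using assms(16) by (simp add: case_prod_beta')
  have pairm: "(\<lambda>\<omega>. (V \<omega>, W \<omega>)) \<in> measurable M borel"
    if "V \<in> borel_measurable M" "W \<in> borel_measurable M"
    for V W :: "'w \<Rightarrow> 'b"
  proof -
    have "(\<lambda>\<omega>. (V \<omega>, W \<omega>)) \<in> measurable M (borel \<Otimes>\<^sub>M borel)" using that by measurable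
    then show ?thesis by (simp add: borel_prod)
  qed
  have fm[measurable]: "f \<in> borel_measurable borel" by fact
  have fX[measurable]: "(\<lambda>\<omega>. f (X \<omega>)) \<in> borel_measurable M" by measurable
  have l_meas: "(\<lambda>\<omega>. ennreal (l (V \<omega>) (W \<omega>))) \<in> borel_measurable M"
    if "V \<in> borel_measurable M" "W \<in> borel_measurable M" for V W :: "'w \<Rightarrow> 'b"
  proof -
    have "(\<lambda>\<omega>. l (fst (V \<omega>, W \<omega>)) (snd (V \<omega>, W \<omega>))) \<in> borel_measurable M"
      using measurable_comp[OF pairm[OF that] lm] by (simp add: o_def)
    then show ?thesis by simp
  qed
  have B_meas: "(\<lambda>\<omega>. ennreal (B (V \<omega>) (W \<omega>))) \<in> borel_measurable M"
    if "V \<in> borel_measurable M" "W \<in> borel_measurable M" for V W :: "'w \<Rightarrow> 'b"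
  proof -
    have "(\<lambda>\<omega>. B (fst (V \<omega>, W \<omega>)) (snd (V \<omega>, W \<omega>))) \<in> borel_measurable M"
      using measurable_comp[OF pairm[OF that] Bm] by (simp add: o_def)
    then show ?thesis by simp
  qed
  have R_le: "std_risk M l f X Y \<le> adv_risk M N eps l f X Y"
    unfolding std_risk_def adv_risk_def
  proof (rule nn_integral_mono)
    fix \<omega> show "ennreal (l (f (X \<omega>)) (Y \<omega>)) \<le> (SUP \<Delta>\<in>?D. ennreal (l (f (X \<omega> + \<Delta>)) (Y \<omega>)))"
      using SUP_upper[OF D0, of "\<lambda>\<Delta>. ennreal (l (f (X \<omega> + \<Delta>)) (Y \<omega>))"] by simp
  qed
  have part1: "(\<integral>\<^sup>+ \<omega>. (SUP \<Delta>\<in>?D. ennreal (B (f (X \<omega>)) (f (X \<omega> + \<Delta>)))) \<partial>M)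
      \<le> std_risk M l f X Y + adv_risk M N eps l f X Y"
  proof -
    have "(\<integral>\<^sup>+ \<omega>. (SUP \<Delta>\<in>?D. ennreal (B (f (X \<omega>)) (f (X \<omega> + \<Delta>)))) \<partial>M)
        \<le> (\<integral>\<^sup>+ \<omega>. ennreal (l (f (X \<omega>)) (Y \<omega>)) + (SUP \<Delta>\<in>?D. ennreal (l (f (X \<omega> + \<Delta>)) (Y \<omega>))) \<partial>M)"
    proof (rule nn_integral_mono)
      fix \<omega>
      show "(SUP \<Delta>\<in>?D. ennreal (B (f (X \<omega>)) (f (X \<omega> + \<Delta>))))
          \<le> ennreal (l (f (X \<omega>)) (Y \<omega>)) + (SUP \<Delta>\<in>?D. ennreal (l (f (X \<omega> + \<Delta>)) (Y \<omega>)))"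
      proof (rule SUP_least)
        fix \<Delta> assume "\<Delta> \<in> ?D"
        have "B (f (X \<omega>)) (f (X \<omega> + \<Delta>)) \<le> l (f (X \<omega>)) (Y \<omega>) + l (f (X \<omega> + \<Delta>)) (Y \<omega>)"
          using assms(14) assms(11) by (metis add_0_right)
        then have "ennreal (B (f (X \<omega>)) (f (X \<omega> + \<Delta>))) \<le> ennreal (l (f (X \<omega>)) (Y \<omega>)) + ennreal (l (f (X \<omega> + \<Delta>)) (Y \<omega>))"
          using assms(8) by (simp add: ennreal_plus[symmetric] del: ennreal_plus)
        also have "\<dots> \<le> ennreal (l (f (X \<omega>)) (Y \<omega>)) + (SUP \<Delta>\<in>?D. ennreal (l (f (X \<omega> + \<Delta>)) (Y \<omega>)))"
          using SUP_upper[OF \<open>\<Delta> \<in> ?D\<close>, of "\<lambda>\<Delta>. ennreal (l (f (X \<omega> + \<Delta>)) (Y \<omega>))"]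
          by (intro add_left_mono) simp
        finally show "ennreal (B (f (X \<omega>)) (f (X \<omega> + \<Delta>))) \<le> \<dots>" .
      qed
    qed
    also have "\<dots> = std_risk M l f X Y + adv_risk M N eps l f X Y"
      unfolding std_risk_def adv_risk_def
      by (rule nn_integral_add) (auto intro: l_meas assms(19))
    finally show ?thesis .
  qed
  have dist: "distr M borel (\<lambda>\<omega>. (X \<omega>, Y \<omega>)) = distr M borel (\<lambda>\<omega>. (X \<omega>, Y' \<omega>))"
    using assms(7) unfolding cond_iid_copy_def Let_def
    by (intro distr_eq[OF assms(1,4,5,6) refl]) blast
  have RY': "(\<integral>\<^sup>+ \<omega>. ennreal (l (f (X \<omega>)) (Y' \<omega>)) \<partial>M) = std_risk M l f X Y"
  proof -
    let ?h = "\<lambda>p::'a \<times> 'b. ennreal (l (f (fst p)) (snd p))"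
    have hm: "?h \<in> borel_measurable borel"
    proof -
      have "(\<lambda>p::'a \<times> 'b. (f (fst p), snd p)) \<in> measurable (borel \<Otimes>\<^sub>M borel) (borel \<Otimes>\<^sub>M borel)"
        by measurable
      then have inner: "(\<lambda>p::'a \<times> 'b. (f (fst p), snd p)) \<in> measurable borel borel"
        by (simp add: borel_prod)
      have "(\<lambda>p::'a \<times> 'b. l (f (fst p)) (snd p)) \<in> borel_measurable borel"
        using measurable_comp[OF inner lm] by (simp add: o_def)
      then show ?thesis by simp
    qed
    have pairm': "(\<lambda>\<omega>. (X \<omega>, Y' \<omega>)) \<in> measurable M borel"
    proof -
      have "(\<lambda>\<omega>. (X \<omega>, Y' \<omega>)) \<in> measurable M (borel \<Otimes>\<^sub>M borel)" by measurable
      then show ?thesis by (simp add: borel_prod)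
    qed
    have pairm'': "(\<lambda>\<omega>. (X \<omega>, Y \<omega>)) \<in> measurable M borel"
    proof -
      have "(\<lambda>\<omega>. (X \<omega>, Y \<omega>)) \<in> measurable M (borel \<Otimes>\<^sub>M borel)" by measurable
      then show ?thesis by (simp add: borel_prod)
    qed
    have "(\<integral>\<^sup>+ \<omega>. ennreal (l (f (X \<omega>)) (Y' \<omega>)) \<partial>M) = (\<integral>\<^sup>+ p. ?h p \<partial>distr M borel (\<lambda>\<omega>. (X \<omega>, Y' \<omega>)))"
      using hm by (subst nn_integral_distr[OF pairm']) simp_all
    also have "\<dots> = (\<integral>\<^sup>+ p. ?h p \<partial>distr M borel (\<lambda>\<omega>. (X \<omega>, Y \<omega>)))" by (simp add: dist)
    also have "\<dots> = std_risk M l f X Y"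
      unfolding std_risk_def using hm by (subst nn_integral_distr[OF pairm'']) simp_all
    finally show ?thesis .
  qed
  have part2: "(\<integral>\<^sup>+ \<omega>. ennreal (B (Y \<omega>) (Y' \<omega>)) \<partial>M) \<le> std_risk M l f X Y + adv_risk M N eps l f X Y"
  proof -
    have "(\<integral>\<^sup>+ \<omega>. ennreal (B (Y \<omega>) (Y' \<omega>)) \<partial>M)
        \<le> (\<integral>\<^sup>+ \<omega>. ennreal (l (f (X \<omega>)) (Y \<omega>)) + ennreal (l (f (X \<omega>)) (Y' \<omega>)) \<partial>M)"
    proof (rule nn_integral_mono)
      fix \<omega>
      have "B (Y \<omega>) (Y' \<omega>) \<le> l (f (X \<omega>)) (Y \<omega>) + l (f (X \<omega>)) (Y' \<omega>)"
        using assms(13) assms(11) by (metis add_0_right)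
      then show "ennreal (B (Y \<omega>) (Y' \<omega>)) \<le> ennreal (l (f (X \<omega>)) (Y \<omega>)) + ennreal (l (f (X \<omega>)) (Y' \<omega>))"
        using assms(8) by (simp add: ennreal_plus[symmetric] del: ennreal_plus)
    qed
    also have "\<dots> = std_risk M l f X Y + (\<integral>\<^sup>+ \<omega>. ennreal (l (f (X \<omega>)) (Y' \<omega>)) \<partial>M)"
      unfolding std_risk_def
      by (rule nn_integral_add) (auto intro: l_meas)
    also have "\<dots> = std_risk M l f X Y + std_risk M l f X Y" by (simp add: RY')
    also have "\<dots> \<le> std_risk M l f X Y + adv_risk M N eps l f X Y"
      using R_le by (intro add_left_mono)
    finally show ?thesis .
  qed
  show ?thesis using part1 part2 by simp
qed

end
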